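(* Let $d\ge 3$. If $w$ is a nonempty word over the alphabet $A=\{a_1,\dots,a_d\}$ (positive letters only, no inverses), then $w$ does not represent the identity element of $G_d$.
   Context: Let $d\ge 3$, $X=\{1,\dots,d\}$, $T$ the $d$-regular rooted tree with vertex set $X^*$. $\mathrm{Aut}(T)$ is the group of root-preserving automorphisms with product left-to-right: $(gh)(u)=h(g(u))$. Sections $g|_u$ are defined by $g(uv)=g(u)\,g|_u(v)$; we write $g=(g|_1,\dots,g|_d)\lambda_g$ with $\lambda_g\in S_d$ the action on the first level; $e$ is the identity; $\overline{j}\in\{1,\dots,d\}$ denotes $j$ mod $d$. $G_d=\langle a_1,\dots,a_d\rangle\le\mathrm{Aut}(T)$ where $a_i$ acts on the first level as $(i\ \overline{i+1})$, with $a_i|_i=a_i$, $a_i|_{\overline{i+1}}=a_{\overline{i+1}}$, and $a_i|_x=e$ otherwise. *)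

theory Defs
  imports Main
begin

text \<open>Letters of X are 1..d; vertices of the tree T are lists over {1..d}.
  nxt d i is the residue of i+1 modulo d, taken in {1..d}.\<close>
definition nxt :: "nat \<Rightarrow> nat \<Rightarrow> nat" where
  "nxt d i = (if i = d then 1 else i + 1)"

text \<open>Action of the generator a_i on a vertex:
  a_i(x v) = a_i(x) a_i|_x(v), with a_i acting on the first level as the
  transposition (i, nxt d i), a_i|_i = a_i, a_i|_(nxt d i) = a_(nxt d i),
  and trivial sections elsewhere.\<close>
fun gen_act :: "nat \<Rightarrow> nat \<Rightarrow> nat list \<Rightarrow> nat list" where
  "gen_act d i [] = []"
| "gen_act d i (x # v) =
     (if x = i then nxt d i # gen_act d i v
      else if x = nxt d i then i # gen_act d (nxt d i) v
      else x # v)"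

text \<open>Action of the group element represented by a positive word
  a_{i1} ... a_{ik} (list [i1,...,ik]); products are left-to-right, so
  a_{i1} acts first.\<close>
definition word_act :: "nat \<Rightarrow> nat list \<Rightarrow> nat list \<Rightarrow> nat list" where
  "word_act d w u = fold (gen_act d) w u"

definition represents_identity :: "nat \<Rightarrow> nat list \<Rightarrow> bool" where
  "represents_identity d w \<longleftrightarrow> (\<forall>u \<in> lists {1..d}. word_act d w u = u)"

end

theory Submission
  imports Defs
begin

fun sec :: "nat \<Rightarrow> nat list \<Rightarrow> nat \<Rightarrow> nat list \<times> nat" where
  "sec d [] x = ([], x)"
| "sec d (i # w) x =
     (if x = i then (i # fst (sec d w (nxt d i)), snd (sec d w (nxt d i)))
      else if x = nxt d i then (nxt d i # fst (sec d w i), snd (sec d w i))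
      else sec d w x)"

lemma word_act_cons: "word_act d (i # w) v = word_act d w (gen_act d i v)"
  by (simp add: word_act_def)

lemma sec_act:
  "word_act d w (x # u) = snd (sec d w x) # word_act d (fst (sec d w x)) u"
proof (induction w arbitrary: x u)
  case Nil
  then show ?case by (simp add: word_act_def)
next
  case (Cons i w)
  show ?case
    by (auto simp: word_act_cons Cons)
qed

lemma sec_len: "length (fst (sec d w x)) \<le> length w"
  by (induction w arbitrary: x) (auto simp: le_SucI)

lemma nxt_in: "i \<in> {1..d} \<Longrightarrow> nxt d i \<in> {1..d}"
  by (auto simp: nxt_def)

lemma sec_set: "set w \<subseteq> {1..d} \<Longrightarrow> set (fst (sec d w x)) \<subseteq> {1..d}"
  by (induction w arbitrary: x) (auto simp: nxt_def)

lemma nxt_neq: "d \<ge> 3 \<Longrightarrow> i \<in> {1..d} \<Longrightarrow> nxt d i \<noteq> i"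
  unfolding nxt_def by simp

lemma nxt_nxt: "d \<ge> 3 \<Longrightarrow> i \<in> {1..d} \<Longrightarrow> nxt d (nxt d i) \<noteq> i"
  unfolding nxt_def by (cases "i = d"; cases "i + 1 = d") simp_all

lemma nxt_inj: "i \<in> {1..d} \<Longrightarrow> j \<in> {1..d} \<Longrightarrow> nxt d i = nxt d j \<Longrightarrow> i = j"
  unfolding nxt_def by (cases "i = d"; cases "j = d") simp_all

lemma sec_short: "x \<noteq> i \<Longrightarrow> x \<noteq> nxt d i \<Longrightarrow> length (fst (sec d (i # w) x)) < length (i # w)"
  using sec_len[of d w x] by simp

lemma pair_lemma:
  assumes "d \<ge> 3" "j \<in> {1..d}"
  shows "set w \<subseteq> {1..d} \<Longrightarrow> (p = j \<and> q = nxt d j \<or> p = nxt d j \<and> q = j)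
    \<Longrightarrow> length (fst (sec d w p)) = length w \<Longrightarrow> length (fst (sec d w q)) = length w
    \<Longrightarrow> set w \<subseteq> {j}"
proof (induction w arbitrary: p q)
  case Nil
  then show ?case by simp
next
  case (Cons i w)
  have i: "i \<in> {1..d}" using Cons.prems by auto
  have pi: "p = i \<or> p = nxt d i"
    using Cons.prems(3) sec_short[of p i d w] by fastforce
  have qi: "q = i \<or> q = nxt d i"
    using Cons.prems(4) sec_short[of q i d w] by fastforce
  have ij: "i = j"
  proof (rule ccontr)
    assume ne: "i \<noteq> j"
    have pq: "p \<noteq> q" using Cons.prems(2) nxt_neq[OF assms] by auto
    have "j = nxt d i" using pi qi Cons.prems(2) ne pq by auto
    moreover have "nxt d j \<noteq> nxt d i" using nxt_inj[OF i assms(2)] ne by auto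
    hence "nxt d j = i" using pi qi Cons.prems(2) pq by auto
    ultimately show False using nxt_nxt[OF assms(1) i] by simp
  qed
  define p' where "p' = (if p = i then nxt d i else i)"
  define q' where "q' = (if q = i then nxt d i else i)"
  have lp: "length (fst (sec d w p')) = length w"
    using Cons.prems(3) pi nxt_neq[OF assms(1) i] by (auto simp: p'_def)
  have lq: "length (fst (sec d w q')) = length w"
    using Cons.prems(4) qi nxt_neq[OF assms(1) i] by (auto simp: q'_def)
  have "p' = j \<and> q' = nxt d j \<or> p' = nxt d j \<and> q' = j"
    using Cons.prems(2) ij nxt_neq[OF assms] by (auto simp: p'_def q'_def)
  then have "set w \<subseteq> {j}" using Cons.IH[OF _ _ lp lq] Cons.prems(1) by auto
  then show ?case using ij by simp
qed

lemma lift: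
  assumes "word_act d (fst (sec d w x)) u \<noteq> u"
  shows "word_act d w (x # u) \<noteq> x # u"
  using assms by (simp add: sec_act)

lemma core:
  assumes d: "d \<ge> 3"
    and IH: "\<And>v. length v < length w \<Longrightarrow> v \<noteq> [] \<Longrightarrow> set v \<subseteq> {1..d} \<Longrightarrow>
               \<exists>u\<in>lists {1..d}. word_act d v u \<noteq> u"
    and w: "w \<noteq> []" "set w \<subseteq> {1..d}" "\<exists>y\<in>set w. y \<noteq> hd w"
  shows "\<exists>u\<in>lists {1..d}. word_act d w u \<noteq> u"
proof -
  obtain j r where wj: "w = j # r" using w(1) by (cases w) auto
  have j: "j \<in> {1..d}" using w(2) wj by auto
  have nj: "nxt d j \<noteq> j" using nxt_neq[OF d j] .
  have ne1: "fst (sec d w j) \<noteq> []" using wj by (auto)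
  have ne2: "fst (sec d w (nxt d j)) \<noteq> []" using wj nj by (auto)
  show ?thesis
  proof (cases "length (fst (sec d w j)) < length w")
    case True
    then obtain u where u: "u \<in> lists {1..d}" "word_act d (fst (sec d w j)) u \<noteq> u"
      using IH[OF True ne1 sec_set[OF w(2)]] by blast
    then show ?thesis using lift[OF u(2)] j by (intro bexI[of _ "j # u"]) auto
  next
    case F1: False
    show ?thesis
    proof (cases "length (fst (sec d w (nxt d j))) < length w")
      case True
      then obtain u where u: "u \<in> lists {1..d}" "word_act d (fst (sec d w (nxt d j))) u \<noteq> u"
        using IH[OF True ne2 sec_set[OF w(2)]] by blast
      then show ?thesis using lift[OF u(2)] nxt_in[OF j] by (intro bexI[of _ "nxt d j # u"]) auto
    next
      case False
      have "set w \<subseteq> {j}"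
        using pair_lemma[OF d j w(2), of j "nxt d j"] F1 False sec_len[of d w] le_neq_implies_less
        by (metis)
      then show ?thesis using w(3) wj by auto
    qed
  qed
qed

lemma main:
  assumes d: "d \<ge> 3"
  shows "w \<noteq> [] \<Longrightarrow> set w \<subseteq> {1..d} \<Longrightarrow> \<exists>u\<in>lists {1..d}. word_act d w u \<noteq> u"
proof (induction "length w" arbitrary: w rule: less_induct)
  case less
  note IH = less.hyps
  show ?case
  proof (cases "\<exists>y\<in>set w. y \<noteq> hd w")
    case True
    show ?thesis by (rule core[OF d _ less.prems True]) (rule IH, auto)
  next
    case False
    obtain j r where wj: "w = j # r" using less.prems(1) by (cases w) auto
    have j: "j \<in> {1..d}" using less.prems(2) wj by auto
    have nj: "nxt d j \<noteq> j" using nxt_neq[OF d j] .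
    show ?thesis
    proof (cases r)
      case Nil
      have "word_act d w [j] \<noteq> [j]" using wj Nil nj by (simp add: word_act_def)
      then show ?thesis using j by (intro bexI[of _ "[j]"]) auto
    next
      case (Cons k r')
      have kj: "k = j" using False wj Cons by auto
      have s: "fst (sec d w j) = j # nxt d j # fst (sec d r' j)" using wj Cons kj nj by simp
      have ss: "set (fst (sec d w j)) \<subseteq> {1..d}" using sec_set[OF less.prems(2)] .
      have nr: "\<exists>y\<in>set (fst (sec d w j)). y \<noteq> hd (fst (sec d w j))" using s nj by auto
      have "\<exists>u\<in>lists {1..d}. word_act d (fst (sec d w j)) u \<noteq> u"
      proof (rule core[OF d _ _ ss nr])
        fix v assume "length v < length (fst (sec d w j))" "v \<noteq> []" "set v \<subseteq> {1..d}"
        then show "\<exists>u\<in>lists {1..d}. word_act d v u \<noteq> u"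
          using IH sec_len[of d w j] by (meson less_le_trans)
      qed (use s in auto)
      then obtain u where u: "u \<in> lists {1..d}" "word_act d (fst (sec d w j)) u \<noteq> u" by blast
      then show ?thesis using lift[OF u(2)] j by (intro bexI[of _ "j # u"]) auto
    qed
  qed
qed

theorem theorem3p8:
  fixes d :: nat and w :: "nat list"
  assumes "d \<ge> 3" and "w \<noteq> []" and "set w \<subseteq> {1..d}"
  shows "\<not> represents_identity d w"
  using main[OF assms] by (auto simp: represents_identity_def)

end
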